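(* Let $\mathcal{X}=\{1,\ldots,d\}$, let $\mathcal{S}$ be the probability simplex in $\mathbb{R}^d$, and let $p\mapsto\Gamma(p)$ be a Lipschitz continuous map from $\mathcal{S}$ into the $d\times d$ rate matrices on $\mathcal{X}$. Let $\pi^*\in\mathcal{S}$ satisfy $\pi^*\Gamma(\pi^* )=0$, and suppose $\Gamma(\pi^* )$ is irreducible. For $\lambda\in[0,1]$ and $p\in\mathcal{S}$ set $\Gamma^\lambda(p)=\Gamma(\lambda(p-\pi^* )+\pi^* )$, and for an arbitrary initial condition $p^\lambda(0)\in\mathcal{S}$ let $p^\lambda(\cdot)$ be the solution of $$\frac{d}{dt}p^\lambda(t)=p^\lambda(t)\Gamma^\lambda(p^\lambda(t)).$$ Let $\bar F(p)=R(p\|\pi^* )=\sum_{x\in\mathcal{X}}p_x\log(p_x/\pi^*_x)$. Then there is $\lambda_0\in(0,1]$ such that if $\lambda\in[0,\lambda_0]$, then for all $t\ge0$ $$\frac{d}{dt}\bar F(p^\lambda(t))\le 0,$$ with strict inequality if and only if $p^\lambda(t)\ne\pi^*$.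
   Context: A rate matrix on $\mathcal{X}$ is a $d\times d$ real matrix with nonnegative off-diagonal entries and zero row sums; probability vectors are row vectors. $\Gamma(\pi^* )$ is irreducible if all states of $\mathcal{X}$ communicate under the Markov chain with rate matrix $\Gamma(\pi^* )$. The convention $0\log 0=0$ is used in the relative entropy. *)

theory Defs
  imports "HOL-Analysis.Analysis"
begin

text \<open>State space X = index type 'n (finite). Probability vectors are row vectors real^'n;
  matrices are real^'n^'n with Q$x$y the entry in row x, column y.\<close>

definition prob_simplex :: "(real ^ 'n::finite) set" where
  "prob_simplex = {p. (\<forall>x. 0 \<le> p $ x) \<and> (\<Sum>x\<in>UNIV. p $ x) = 1}"

definition rate_matrix :: "real ^ 'n::finite ^ 'n \<Rightarrow> bool" where
  "rate_matrix Q \<longleftrightarrow> (\<forall>x y. x \<noteq> y \<longrightarrow> 0 \<le> Q $ x $ y) \<and> (\<forall>x. (\<Sum>y\<in>UNIV. Q $ x $ y) = 0)"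

definition jump_rel :: "real ^ 'n::finite ^ 'n \<Rightarrow> ('n \<times> 'n) set" where
  "jump_rel Q = {(x, y). x \<noteq> y \<and> 0 < Q $ x $ y}"

definition irreducible_rate :: "real ^ 'n::finite ^ 'n \<Rightarrow> bool" where
  "irreducible_rate Q \<longleftrightarrow> (\<forall>x y. (x, y) \<in> (jump_rel Q)\<^sup>*)"

definition rel_entropy :: "real ^ 'n::finite \<Rightarrow> real ^ 'n \<Rightarrow> real" where
  "rel_entropy p q = (\<Sum>x\<in>UNIV. if p $ x = 0 then 0 else p $ x * ln (p $ x / q $ x))"

end

theory Submission
  imports Defs
begin
lemma ln_le1: fixes u::real assumes "0 < u" "u \<le> 1" shows "ln u \<le> (u - 1) - (u-1)^2/2"
proof -
  define g where "g u = ln u - (u - 1) + (u-1)^2/2" for u::real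
  have d: "(g has_real_derivative (1/x - 1 + (x - 1))) (at x)" if "0 < x" for x
    unfolding g_def using that by (auto intro!: derivative_eq_intros simp: field_simps)
  have "g u \<le> g 1"
  proof (rule DERIV_nonneg_imp_nondecreasing[OF assms(2)])
    fix x assume x: "u \<le> x" "x \<le> 1"
    hence xp: "0 < x" using assms by auto
    have "1/x - 1 + (x-1) = (x-1)^2/x" using xp by (simp add: field_simps power2_eq_square)
    also have "\<dots> \<ge> 0" using xp by simp
    finally show "\<exists>y. (g has_real_derivative y) (at x) \<and> 0 \<le> y" using d[OF xp] by blast
  qed
  thus ?thesis unfolding g_def by simp
qed
lemma ln_ge1: fixes u::real assumes "1 \<le> u" shows "ln u \<le> (u - 1/u)/2"
proof -
  define g where "g u = (u - 1/u)/2 - ln u" for u::real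
  have d: "(g has_real_derivative ((1 + 1/x^2)/2 - 1/x)) (at x)" if "0 < x" for x
    unfolding g_def using that by (auto intro!: derivative_eq_intros simp: power2_eq_square field_simps)
  have "g 1 \<le> g u"
  proof (rule DERIV_nonneg_imp_nondecreasing[OF assms(1)])
    fix x assume x: "1 \<le> x" "x \<le> u"
    hence xp: "0 < x" using assms by auto
    have "(1 + 1/x^2)/2 - 1/x = (x-1)^2/(2*x^2)" using xp by (simp add: field_simps power2_eq_square)
    also have "\<dots> \<ge> 0" using xp by simp
    finally show "\<exists>y. (g has_real_derivative y) (at x) \<and> 0 \<le> y" using d[OF xp] by blast
  qed
  thus ?thesis unfolding g_def by simp
qed
lemma psi_bound: fixes a b::real assumes "0 < a" "0 < b"
  shows "(b - a)^2 / (2 * max a b) \<le> b - a - a * (ln b - ln a)"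
proof -
  define u where "u = b / a"
  have u: "0 < u" "b = a * u" using assms by (auto simp: u_def field_simps)
  have lnd: "ln b - ln a = ln u" using assms by (simp add: u_def ln_div)
  have key: "(u-1)^2/(2*max 1 u) \<le> u - 1 - ln u"
  proof (cases "u \<le> 1")
    case True
    have "(u-1)^2/(2*max 1 u) = (u-1)^2/2" using True by simp
    thus ?thesis using ln_le1[OF u(1) True] by simp
  next
    case False
    have e: "(u-1)^2/(2*max 1 u) = (u-1)^2/(2*u)" using False by simp
    have "u - 1 - (u - 1/u)/2 = (u-1)^2/(2*u)" using u(1) by (simp add: field_simps power2_eq_square)
    thus ?thesis using ln_ge1[of u] False e by linarith
  qed
  have m: "max a b = a * max 1 u" using u assms by (simp add: max_def)
  have ba: "b - a = a * (u - 1)" using u by (simp add: algebra_simps)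
  have mp: "max 1 u > 0" by simp
  have "(b - a)^2 / (2 * max a b) = (a * (u - 1))^2 / (2 * (a * max 1 u))" by (simp only: ba m)
  also have "\<dots> = a * ((u-1)^2/(2*max 1 u))"
    using assms mp by (simp add: field_simps power2_eq_square)
  also have "\<dots> \<le> a * (u - 1 - ln u)" using key assms by (intro mult_left_mono) auto
  also have "\<dots> = b - a - a * (ln b - ln a)" using u lnd by (simp add: algebra_simps)
  finally show ?thesis .
qed
lemma G_identity:
  fixes Q :: "real^'n::finite^'n" and p pi :: "real^'n" and r :: "'n \<Rightarrow> real"
  assumes rows: "\<forall>x. (\<Sum>y\<in>UNIV. Q$x$y) = 0"
    and pr: "\<forall>x. p$x = pi$x * r x"
  shows "(\<Sum>y\<in>UNIV. (p v* Q)$y * ln (r y)) =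
     (\<Sum>y\<in>UNIV. r y * (pi v* Q)$y) -
     (\<Sum>x\<in>UNIV. \<Sum>y\<in>UNIV. pi$x * Q$x$y * (r y - r x - r x * (ln (r y) - ln (r x))))"
proof -
  define A where "A = (\<Sum>x\<in>UNIV. \<Sum>y\<in>UNIV. pi$x * Q$x$y * r y)"
  define B where "B = (\<Sum>x\<in>UNIV. \<Sum>y\<in>UNIV. pi$x * r x * Q$x$y * ln (r y))"
  have 1: "(\<Sum>y\<in>UNIV. (p v* Q)$y * ln (r y)) = B"
  proof -
    have "(\<Sum>y\<in>UNIV. (p v* Q)$y * ln (r y)) = (\<Sum>y\<in>UNIV. \<Sum>x\<in>UNIV. pi$x * r x * Q$x$y * ln (r y))"
      unfolding vector_matrix_mult_def by (auto simp: sum_distrib_right sum_distrib_left pr mult_ac intro!: sum.cong)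
    also have "\<dots> = B" unfolding B_def by (rule sum.swap)
    finally show ?thesis .
  qed
  have 2: "(\<Sum>y\<in>UNIV. r y * (pi v* Q)$y) = A"
  proof -
    have "(\<Sum>y\<in>UNIV. r y * (pi v* Q)$y) = (\<Sum>y\<in>UNIV. \<Sum>x\<in>UNIV. pi$x * Q$x$y * r y)"
      unfolding vector_matrix_mult_def by (simp add: sum_distrib_left mult_ac)
    also have "\<dots> = A" unfolding A_def by (rule sum.swap)
    finally show ?thesis .
  qed
  have z1: "(\<Sum>y\<in>UNIV. pi$x * Q$x$y * r x) = 0" for x
  proof -
    have "(\<Sum>y\<in>UNIV. pi$x * Q$x$y * r x) = pi$x * (\<Sum>y\<in>UNIV. Q$x$y) * r x"
      by (simp add: sum_distrib_left sum_distrib_right)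
    thus ?thesis using rows by simp
  qed
  have z2: "(\<Sum>y\<in>UNIV. pi$x * Q$x$y * (r x * ln (r x))) = 0" for x
  proof -
    have "(\<Sum>y\<in>UNIV. pi$x * Q$x$y * (r x * ln (r x))) = pi$x * (\<Sum>y\<in>UNIV. Q$x$y) * (r x * ln (r x))"
      by (simp add: sum_distrib_left sum_distrib_right)
    thus ?thesis using rows by simp
  qed
  have e: "pi$x * Q$x$y * (r y - r x - r x * (ln (r y) - ln (r x))) =
     pi$x * Q$x$y * r y - pi$x * r x * Q$x$y * ln (r y) - pi$x * Q$x$y * r x + pi$x * Q$x$y * (r x * ln (r x))" for x y
    by (simp add: algebra_simps)
  have 3: "(\<Sum>x\<in>UNIV. \<Sum>y\<in>UNIV. pi$x * Q$x$y * (r y - r x - r x * (ln (r y) - ln (r x)))) = A - B"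
    unfolding e A_def B_def by (simp add: sum_subtractf sum.distrib z1 z2)
  show ?thesis using 1 2 3 by simp
qed
lemma main_est:
  fixes Q :: "real^'n::finite^'n" and p pi :: "real^'n" and E :: "('n\<times>'n) set"
  assumes offd: "\<forall>x y. x \<noteq> y \<longrightarrow> 0 \<le> Q$x$y"
    and rows: "\<forall>x. (\<Sum>y\<in>UNIV. Q$x$y) = 0"
    and pipos: "\<forall>x. m \<le> pi$x" and m: "0 < m"
    and pisum: "(\<Sum>x\<in>UNIV. pi$x) = 1"
    and ppos: "\<forall>x. 0 < p$x" and psum: "(\<Sum>x\<in>UNIV. p$x) = 1"
    and Eq: "\<forall>(x,y)\<in>E. x \<noteq> y \<and> \<delta> \<le> Q$x$y" and dl: "0 < \<delta>"
    and conn: "\<forall>x y. \<exists>k\<le>N. (x,y) \<in> E^^k"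
    and K: "0 \<le> K" "\<forall>y. \<bar>(pi v* Q)$y\<bar> \<le> K * norm (p - pi)"
    and small: "real CARD('n) * K * (real N)^2 \<le> m^2*\<delta>/4"
  shows "(\<Sum>y\<in>UNIV. (p v* Q)$y * ln (p$y/pi$y)) \<le> -(m^2*\<delta>/4) * (\<Sum>(x,y)\<in>E. (p$y/pi$y - p$x/pi$x)^2)
     \<and> ((\<Sum>(x,y)\<in>E. (p$y/pi$y - p$x/pi$x)^2) = 0 \<longrightarrow> p = pi)"
proof -
  define r where "r x = p$x/pi$x" for x
  define T where "T = (\<Sum>(x,y)\<in>E. (r y - r x)^2)"
  have pip: "0 < pi$x" for x using pipos m by (meson less_le_trans)
  have pr: "p$x = pi$x * r x" for x using pip[of x] by (simp add: r_def)
  have rpos: "0 < r x" for x using pip[of x] ppos by (simp add: r_def)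
  have ple1: "p$x \<le> 1" for x
  proof -
    have "p$x \<le> (\<Sum>x\<in>UNIV. p$x)" by (rule member_le_sum) (use ppos in \<open>auto simp: less_imp_le\<close>)
    thus ?thesis using psum by simp
  qed
  have rle: "r x \<le> 1/m" for x
  proof -
    have "r x \<le> 1 / pi$x" unfolding r_def using pip[of x] ple1[of x] by (simp add: divide_right_mono)
    also have "\<dots> \<le> 1/m" using pipos m by (simp add: frac_le)
    finally show ?thesis .
  qed
  have T0: "0 \<le> T" unfolding T_def by (rule sum_nonneg) auto
  have edge: "\<bar>r x - r y\<bar> \<le> sqrt T" if "(x,y) \<in> E" for x y
  proof -
    have "(\<lambda>(x,y). (r y - r x)^2) (x,y) \<le> T" unfolding T_def
      by (rule member_le_sum) (use that in auto)
    hence "(r y - r x)^2 \<le> T" by simp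
    hence "sqrt ((r y - r x)^2) \<le> sqrt T" by (rule real_sqrt_le_mono)
    thus ?thesis by (simp add: abs_minus_commute)
  qed
  have path: "\<bar>r x - r y\<bar> \<le> real k * sqrt T" if "(x,y) \<in> E^^k" for k x y
    using that
  proof (induction k arbitrary: y)
    case 0 thus ?case by simp
  next
    case (Suc k)
    then obtain z where z: "(x,z) \<in> E^^k" "(z,y) \<in> E" by auto
    have "\<bar>r x - r y\<bar> \<le> \<bar>r x - r z\<bar> + \<bar>r z - r y\<bar>" by simp
    also have "\<dots> \<le> real k * sqrt T + sqrt T" using Suc.IH[OF z(1)] edge[OF z(2)] by simp
    finally show ?case by (simp add: algebra_simps)
  qed
  have pair: "\<bar>r x - r y\<bar> \<le> real N * sqrt T" for x y
  proof -
    obtain k where k: "k \<le> N" "(x,y) \<in> E^^k" using conn by blast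
    have "\<bar>r x - r y\<bar> \<le> real k * sqrt T" by (rule path[OF k(2)])
    also have "\<dots> \<le> real N * sqrt T" using k(1) T0 by (intro mult_right_mono) auto
    finally show ?thesis .
  qed
  have r1: "\<bar>r y - 1\<bar> \<le> real N * sqrt T" for y
  proof -
    have one: "1 = (\<Sum>x\<in>UNIV. pi$x * r x)" using psum pr by simp
    have "r y - 1 = (\<Sum>x\<in>UNIV. pi$x * (r y - r x))"
      using pisum one by (simp add: algebra_simps sum_subtractf sum_distrib_left[symmetric])
    hence "\<bar>r y - 1\<bar> \<le> (\<Sum>x\<in>UNIV. \<bar>pi$x * (r y - r x)\<bar>)" by (simp add: sum_abs)
    also have "\<dots> \<le> (\<Sum>x\<in>UNIV. pi$x * (real N * sqrt T))"
      using pip pair by (intro sum_mono) (simp add: abs_mult less_imp_le mult_left_mono)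
    also have "\<dots> = real N * sqrt T" using pisum by (simp add: sum_distrib_right[symmetric])
    finally show ?thesis .
  qed
  have nrm: "norm (p - pi) \<le> real N * sqrt T"
  proof -
    have "norm (p - pi) \<le> (\<Sum>x\<in>UNIV. \<bar>(p - pi)$x\<bar>)" by (rule norm_le_l1_cart)
    also have "\<dots> = (\<Sum>x\<in>UNIV. pi$x * \<bar>r x - 1\<bar>)"
    proof (intro sum.cong refl)
      fix x
      have "(p - pi)$x = pi$x * (r x - 1)" by (simp add: pr algebra_simps)
      thus "\<bar>(p - pi)$x\<bar> = pi$x * \<bar>r x - 1\<bar>" using pip[of x] by (simp add: abs_mult)
    qed
    also have "\<dots> \<le> (\<Sum>x\<in>UNIV. pi$x * (real N * sqrt T))"
      using pip r1 by (intro sum_mono mult_left_mono) (auto simp: less_imp_le)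
    also have "\<dots> = real N * sqrt T" using pisum by (simp add: sum_distrib_right[symmetric])
    finally show ?thesis .
  qed
  have colsum: "(\<Sum>y\<in>UNIV. (pi v* Q)$y) = 0"
  proof -
    have "(\<Sum>y\<in>UNIV. (pi v* Q)$y) = (\<Sum>y\<in>UNIV. \<Sum>x\<in>UNIV. pi$x * Q$x$y)"
      unfolding vector_matrix_mult_def by simp
    also have "\<dots> = (\<Sum>x\<in>UNIV. \<Sum>y\<in>UNIV. pi$x * Q$x$y)" by (rule sum.swap)
    also have "\<dots> = (\<Sum>x\<in>UNIV. pi$x * (\<Sum>y\<in>UNIV. Q$x$y))" by (simp add: sum_distrib_left)
    also have "\<dots> = 0" using rows by simp
    finally show ?thesis .
  qed
  have pert: "(\<Sum>y\<in>UNIV. r y * (pi v* Q)$y) \<le> real CARD('n) * K * (real N)^2 * T"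
  proof -
    have "(\<Sum>y\<in>UNIV. r y * (pi v* Q)$y) = (\<Sum>y\<in>UNIV. (r y - 1) * (pi v* Q)$y)"
      using colsum by (simp add: algebra_simps sum_subtractf)
    also have "\<dots> \<le> (\<Sum>y\<in>UNIV. \<bar>r y - 1\<bar> * \<bar>(pi v* Q)$y\<bar>)"
      by (intro sum_mono) (metis abs_ge_self abs_mult)
    also have "\<dots> \<le> (\<Sum>y\<in>(UNIV::'n set). (real N * sqrt T) * (K * (real N * sqrt T)))"
    proof (rule sum_mono, goal_cases)
      case (1 y)
      have a: "\<bar>(pi v* Q)$y\<bar> \<le> K * (real N * sqrt T)"
        using K nrm by (meson mult_left_mono order_trans)
      show "\<bar>r y - 1\<bar> * \<bar>(pi v* Q)$y\<bar> \<le> real N * sqrt T * (K * (real N * sqrt T))"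
        by (rule mult_mono[OF r1 a]) (use T0 in auto)
    qed
    also have "\<dots> = real CARD('n) * K * (real N)^2 * T"
      using T0 by (simp add: power2_eq_square algebra_simps)
    finally show ?thesis .
  qed
  define psi where "psi x y = r y - r x - r x * (ln (r y) - ln (r x))" for x y
  have psi0: "0 \<le> psi x y" for x y
  proof -
    have "0 < max (r x) (r y)" using rpos by (simp add: less_max_iff_disj)
    hence "0 \<le> (r y - r x)^2 / (2 * max (r x) (r y))" by simp
    also have "\<dots> \<le> psi x y" unfolding psi_def by (rule psi_bound) (use rpos in auto)
    finally show ?thesis .
  qed
  have psiE: "(r y - r x)^2 * (m/2) \<le> psi x y" for x y
  proof -
    have mx: "0 < max (r x) (r y)" "max (r x) (r y) \<le> 1/m" using rpos[of x] rle[of x] rle[of y] by (auto simp: less_max_iff_disj)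
    have "(r y - r x)^2 * (m/2) = (r y - r x)^2 / (2 * (1/m))" using m by simp
    also have "\<dots> \<le> (r y - r x)^2 / (2 * max (r x) (r y))"
      using mx m by (intro divide_left_mono) auto
    also have "\<dots> \<le> psi x y" unfolding psi_def by (rule psi_bound) (use rpos in auto)
    finally show ?thesis .
  qed
  define f where "f x y = pi$x * Q$x$y * psi x y" for x y
  have f0: "0 \<le> f x y" for x y
  proof (cases "x = y")
    case True thus ?thesis by (simp add: f_def psi_def)
  next
    case False thus ?thesis unfolding f_def using offd pip[of x] psi0[of x y] by simp
  qed
  have mainsum: "(m^2*\<delta>/2) * T \<le> (\<Sum>x\<in>UNIV. \<Sum>y\<in>UNIV. f x y)"
  proof -
    have "(m^2*\<delta>/2) * T = (\<Sum>(x,y)\<in>E. (m^2*\<delta>/2) * (r y - r x)^2)"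
      unfolding T_def by (simp add: sum_distrib_left case_prod_unfold)
    also have "\<dots> \<le> (\<Sum>(x,y)\<in>E. f x y)"
    proof (rule sum_mono, clarify)
      fix x y assume xy: "(x,y) \<in> E"
      have Qd: "\<delta> \<le> Q$x$y" using Eq xy by auto
      have "(m^2*\<delta>/2) * (r y - r x)^2 = m * \<delta> * ((r y - r x)^2 * (m/2))" by (simp add: power2_eq_square)
      also have "\<dots> \<le> pi$x * Q$x$y * psi x y"
      proof (rule mult_mono)
        show "m * \<delta> \<le> pi$x * Q$x$y" using pipos Qd m dl pip[of x] by (intro mult_mono) (auto simp: less_imp_le)
        show "(r y - r x)^2 * (m/2) \<le> psi x y" by (rule psiE)
        show "0 \<le> pi$x * Q$x$y" using pip[of x] Qd dl by simp
      qed (use m in simp)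
      finally show "(m^2*\<delta>/2) * (r y - r x)^2 \<le> f x y" by (simp add: f_def)
    qed
    also have "\<dots> \<le> (\<Sum>(x,y)\<in>UNIV. f x y)"
      by (rule sum_mono2) (auto simp: f0)
    also have "\<dots> = (\<Sum>x\<in>UNIV. \<Sum>y\<in>UNIV. f x y)"
      by (simp add: sum.cartesian_product)
    finally show ?thesis .
  qed
  have G: "(\<Sum>y\<in>UNIV. (p v* Q)$y * ln (r y)) = (\<Sum>y\<in>UNIV. r y * (pi v* Q)$y) - (\<Sum>x\<in>UNIV. \<Sum>y\<in>UNIV. f x y)"
    unfolding f_def psi_def by (rule G_identity) (use rows pr in auto)
  have "(\<Sum>y\<in>UNIV. (p v* Q)$y * ln (r y)) \<le> -(m^2*\<delta>/4) * T"
  proof -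
    have "real CARD('n) * K * (real N)^2 * T \<le> (m^2*\<delta>/4) * T" using small T0 by (rule mult_right_mono)
    thus ?thesis using G pert mainsum by (simp add: algebra_simps)
  qed
  moreover have "T = 0 \<longrightarrow> p = pi"
  proof
    assume "T = 0"
    hence "r y = 1" for y using r1[of y] by simp
    thus "p = pi" using pr by (simp add: vec_eq_iff)
  qed
  ultimately show ?thesis unfolding r_def T_def by simp
qed
lemma my_at_bot_mono:
  fixes f g :: "'a \<Rightarrow> real"
  assumes "filterlim f at_bot F" "eventually (\<lambda>x. g x \<le> f x) F"
  shows "filterlim g at_bot F"
  unfolding filterlim_at_bot
proof
  fix Z
  have "eventually (\<lambda>x. f x \<le> Z) F" using assms(1) by (simp add: filterlim_at_bot)
  thus "eventually (\<lambda>x. g x \<le> Z) F" using assms(2) by eventually_elim simp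
qed

lemma term_pos:
  fixes g :: "real \<Rightarrow> real"
  assumes d: "(g has_real_derivative g') (at t within S)" and gt: "0 < g t" and c: "0 < c"
  shows "((\<lambda>s. (g s * ln (g s / c) - g t * ln (g t / c)) / (s - t)) \<longlongrightarrow> g' * (ln (g t / c) + 1)) (at t within S)"
proof -
  have "((\<lambda>s. g s * ln (g s / c)) has_real_derivative g' * ln (g t / c) + g t * (g' / c / (g t / c))) (at t within S)"
    using gt c by (auto intro!: derivative_eq_intros d)
  also have "g' * ln (g t / c) + g t * (g' / c / (g t / c)) = g' * (ln (g t / c) + 1)"
    using gt c by (simp add: field_simps)
  finally show ?thesis by (simp add: has_field_derivative_iff)
qed

lemma term_bot:
  fixes g :: "real \<Rightarrow> real"
  assumes d: "(g has_real_derivative g') (at t within S)" and gt: "g t = 0" and g': "0 < g'"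
    and c: "0 < c" and nn: "\<forall>s\<in>S. 0 \<le> g s"
  shows "filterlim (\<lambda>s. (g s * ln (g s / c) - g t * ln (g t / c)) / (s - t)) at_bot (at t within S)"
    and "eventually (\<lambda>s. t < s \<and> 0 < g s) (at t within S)"
proof -
  have h: "((\<lambda>s. g s / (s - t)) \<longlongrightarrow> g') (at t within S)"
    using d gt by (simp add: has_field_derivative_iff)
  have e1: "eventually (\<lambda>s. 0 < g s / (s - t)) (at t within S)"
    using order_tendstoD(1)[OF h g'] .
  have e2: "eventually (\<lambda>s. s \<in> S \<and> s \<noteq> t) (at t within S)"
    by (auto simp: eventually_at_filter)
  show ev: "eventually (\<lambda>s. t < s \<and> 0 < g s) (at t within S)"
    using e1 e2
  proof eventually_elim
    case (elim s)
    hence "0 \<le> g s" using nn by auto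
    with elim show ?case by (auto simp: zero_less_divide_iff)
  qed
  have cont: "(g \<longlongrightarrow> 0) (at t within S)"
    using DERIV_continuous[OF d] gt by (simp add: continuous_within)
  have "filterlim (\<lambda>s. g s / c) (at_right 0) (at t within S)"
  proof (rule filterlim_at_withinI)
    show "((\<lambda>s. g s / c) \<longlongrightarrow> 0) (at t within S)" using tendsto_divide[OF cont tendsto_const, of c] c by simp
    show "\<forall>\<^sub>F x in at t within S. g x / c \<in> {0<..} - {0}" using ev by eventually_elim (use c in simp)
  qed
  hence l: "filterlim (\<lambda>s. ln (g s / c)) at_bot (at t within S)"
    by (rule filterlim_compose[OF ln_at_0])
  have "filterlim (\<lambda>s. g s / (s - t) * ln (g s / c)) at_bot (at t within S)"
    by (rule filterlim_tendsto_pos_mult_at_bot[OF h g' l])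
  thus "filterlim (\<lambda>s. (g s * ln (g s / c) - g t * ln (g t / c)) / (s - t)) at_bot (at t within S)"
    by (rule filterlim_mono_eventually[OF _ order_refl order_refl]) (simp add: gt)
qed

lemma term_zero:
  fixes g :: "real \<Rightarrow> real"
  assumes cont: "(g \<longlongrightarrow> 0) (at t within S)" and gt: "g t = 0"
    and c: "0 < c" and nn: "\<forall>s\<in>S. 0 \<le> g s" and ev: "eventually (\<lambda>s. t < s) (at t within S)"
  shows "eventually (\<lambda>s. (g s * ln (g s / c) - g t * ln (g t / c)) / (s - t) \<le> 0) (at t within S)"
proof -
  have e1: "eventually (\<lambda>s. g s < c) (at t within S)" using order_tendstoD(2)[OF cont c] .
  have e2: "eventually (\<lambda>s. s \<in> S) (at t within S)" by (auto simp: eventually_at_filter)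
  show ?thesis using e1 e2 ev
  proof eventually_elim
    case (elim s)
    have g0: "0 \<le> g s" using nn elim by auto
    have "ln (g s / c) \<le> 0"
    proof (cases "g s = 0")
      case False thus ?thesis using g0 elim c by (simp add: ln_le_zero_iff less_imp_le)
    qed simp
    hence "g s * ln (g s / c) \<le> 0" using g0 by (simp add: mult_nonneg_nonpos)
    thus ?case using elim gt by (simp add: divide_nonpos_pos)
  qed
qed
lemma pi_pos:
  fixes G :: "real^'n::finite^'n" and pi :: "real^'n"
  assumes rate: "rate_matrix G" and stat: "pi v* G = 0" and piS: "pi \<in> prob_simplex"
    and irr: "irreducible_rate G"
  shows "0 < pi$x"
proof (rule ccontr)
  assume "\<not> 0 < pi$x"
  hence z: "pi$x = 0" using piS by (auto simp: prob_simplex_def intro: antisym)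
  have step: "pi$w = 0" if "(w,x) \<in> (jump_rel G)\<^sup>*" for w
    using that
  proof (induction rule: converse_rtrancl_induct)
    case base thus ?case by (rule z)
  next
    case (step w y)
    hence wy: "w \<noteq> y" "0 < G$w$y" by (auto simp: jump_rel_def)
    have "(\<Sum>v\<in>UNIV. pi$v * G$v$y) = (pi v* G)$y" by (simp add: vector_matrix_mult_def)
    hence s0: "(\<Sum>v\<in>UNIV. pi$v * G$v$y) = 0" using stat by simp
    have nn: "\<forall>v\<in>UNIV. 0 \<le> pi$v * G$v$y"
    proof
      fix v show "0 \<le> pi$v * G$v$y"
      proof (cases "v = y")
        case True thus ?thesis using step.IH by simp
      next
        case False thus ?thesis using rate piS by (auto simp: rate_matrix_def prob_simplex_def)
      qed
    qed
    have "\<forall>v\<in>UNIV. pi$v * G$v$y = 0" using sum_nonneg_eq_0_iff[of UNIV "\<lambda>v. pi$v * G$v$y"] s0 nn by simp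
    hence "pi$w * G$w$y = 0" by simp
    thus ?case using wy by simp
  qed
  have "pi$w = 0" for w using step irr by (auto simp: irreducible_rate_def)
  hence "(\<Sum>w\<in>UNIV. pi$w) = 0" by simp
  thus False using piS by (simp add: prob_simplex_def)
qed

lemma boundary_edge:
  fixes p :: "real^'n::finite"
  assumes pS: "p \<in> prob_simplex" and z: "p$z = 0" and E: "\<forall>x y. (x,y) \<in> E\<^sup>*"
  shows "\<exists>a b. (a,b) \<in> E \<and> 0 < p$a \<and> p$b = 0"
proof -
  obtain a0 where a0: "0 < p$a0"
  proof (rule ccontr)
    assume "\<not> thesis"
    hence "\<forall>a. p$a = 0" using that pS by (auto simp: prob_simplex_def intro: antisym not_less[THEN iffD1])
    thus False using pS by (simp add: prob_simplex_def)
  qed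
  have "(a0,z) \<in> E\<^sup>*" using E by blast
  hence "p$z = 0 \<longrightarrow> (\<exists>a b. (a,b) \<in> E \<and> 0 < p$a \<and> p$b = 0)"
  proof (induction rule: rtrancl_induct)
    case base thus ?case using a0 by simp
  next
    case (step y w)
    show ?case
    proof
      assume w: "p$w = 0"
      show "\<exists>a b. (a,b) \<in> E \<and> 0 < p$a \<and> p$b = 0"
      proof (cases "p$y = 0")
        case True thus ?thesis using step.IH by simp
      next
        case False
        hence "0 < p$y" using pS by (auto simp: prob_simplex_def less_le)
        thus ?thesis using step.hyps(2) w by blast
      qed
    qed
  qed
  thus ?thesis using z by simp
qed

lemma flow_pos:
  fixes p :: "real^'n::finite" and Q :: "real^'n^'n"
  assumes pnn: "\<forall>x. 0 \<le> p$x" and offd: "\<forall>x y. x \<noteq> y \<longrightarrow> 0 \<le> Q$x$y"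
    and ab: "a \<noteq> b" "0 < p$a" "p$b = 0" "0 < Q$a$b"
  shows "0 < (p v* Q)$b"
proof -
  have nn: "\<forall>v\<in>UNIV. 0 \<le> p$v * Q$v$b"
  proof
    fix v show "0 \<le> p$v * Q$v$b"
      by (cases "v = b") (use ab pnn offd in auto)
  qed
  have "p$a * Q$a$b \<le> (\<Sum>v\<in>UNIV. p$v * Q$v$b)"
    by (rule member_le_sum) (use nn in auto)
  moreover have "0 < p$a * Q$a$b" using ab by simp
  ultimately show ?thesis by (simp add: vector_matrix_mult_def)
qed
lemma rel_entropy_eq: "rel_entropy p q = (\<Sum>x\<in>UNIV. p$x * ln (p$x / q$x))"
  unfolding rel_entropy_def by (intro sum.cong) auto

lemma colsum_gen:
  fixes Q :: "real^'n::finite^'n" and v :: "real^'n"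
  assumes rows: "\<forall>x. (\<Sum>y\<in>UNIV. Q$x$y) = 0"
  shows "(\<Sum>y\<in>UNIV. (v v* Q)$y) = 0"
proof -
  have "(\<Sum>y\<in>UNIV. (v v* Q)$y) = (\<Sum>y\<in>UNIV. \<Sum>x\<in>UNIV. v$x * Q$x$y)"
    unfolding vector_matrix_mult_def by simp
  also have "\<dots> = (\<Sum>x\<in>UNIV. \<Sum>y\<in>UNIV. v$x * Q$x$y)" by (rule sum.swap)
  also have "\<dots> = (\<Sum>x\<in>UNIV. v$x * (\<Sum>y\<in>UNIV. Q$x$y))" by (simp add: sum_distrib_left)
  also have "\<dots> = 0" using rows by simp
  finally show ?thesis .
qed

lemma simplex_norm: "p \<in> prob_simplex \<Longrightarrow> norm p \<le> 1"
proof -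
  assume p: "p \<in> prob_simplex"
  have "norm p \<le> (\<Sum>x\<in>UNIV. \<bar>p$x\<bar>)" by (rule norm_le_l1_cart)
  also have "\<dots> = (\<Sum>x\<in>UNIV. p$x)" using p by (intro sum.cong) (auto simp: prob_simplex_def)
  finally show ?thesis using p by (simp add: prob_simplex_def)
qed

lemma simplex_comb:
  assumes p: "p \<in> prob_simplex" and w: "w \<in> prob_simplex" and l: "0 \<le> lam" "lam \<le> (1::real)"
  shows "lam *\<^sub>R (p - w) + w \<in> prob_simplex"
proof -
  have "0 \<le> (lam *\<^sub>R (p - w) + w)$x" for x
  proof -
    have "(lam *\<^sub>R (p - w) + w)$x = lam * p$x + (1 - lam) * w$x" by (simp add: algebra_simps)
    thus ?thesis using p w l by (simp add: prob_simplex_def)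
  qed
  moreover have "(\<Sum>x\<in>UNIV. (lam *\<^sub>R (p - w) + w)$x) = 1"
    using p w by (simp add: prob_simplex_def sum.distrib sum_subtractf sum_distrib_left[symmetric] algebra_simps)
  ultimately show ?thesis by (simp add: prob_simplex_def)
qed

lemma entry_le_norm: "\<bar>(A::real^'n::finite^'m::finite)$x$y\<bar> \<le> norm A"
  using component_le_norm_cart[of "A$x" y] Finite_Cartesian_Product.norm_nth_le[of A x] by linarith
theorem proposition3p1:
  fixes \<Gamma> :: "real ^ 'n::finite \<Rightarrow> real ^ 'n ^ 'n"
    and \<pi> :: "real ^ 'n"
  assumes rate: "\<forall>p \<in> prob_simplex. rate_matrix (\<Gamma> p)"
    and lip: "\<exists>L. L-lipschitz_on prob_simplex \<Gamma>"
    and pi_S: "\<pi> \<in> prob_simplex"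
    and stat: "\<pi> v* \<Gamma> \<pi> = 0"
    and irr: "irreducible_rate (\<Gamma> \<pi>)"
  shows "\<exists>lam0. 0 < lam0 \<and> lam0 \<le> 1 \<and>
    (\<forall>lam p. 0 \<le> lam \<and> lam \<le> lam0 \<longrightarrow>
      (\<forall>t\<ge>0. p t \<in> prob_simplex) \<longrightarrow>
      (\<forall>t\<ge>0. (p has_vector_derivative (p t v* \<Gamma> (lam *\<^sub>R (p t - \<pi>) + \<pi>))) (at t within {0..})) \<longrightarrow>
      (\<forall>t\<ge>0. \<exists>D::ereal.
          ((\<lambda>s. ereal ((rel_entropy (p s) \<pi> - rel_entropy (p t) \<pi>) / (s - t))) \<longlongrightarrow> D)
            (at t within {0..})
          \<and> D \<le> 0 \<and> (D < 0 \<longleftrightarrow> p t \<noteq> \<pi>)))"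
proof -
  obtain L where L: "L-lipschitz_on prob_simplex \<Gamma>" using lip by blast
  have L0: "0 \<le> L" using L by (simp add: lipschitz_on_def)
  have Ldist: "dist (\<Gamma> u) (\<Gamma> v) \<le> L * dist u v" if "u \<in> prob_simplex" "v \<in> prob_simplex" for u v
    using L that by (simp add: lipschitz_on_def)
  define G0 where "G0 = \<Gamma> \<pi>"
  define E where "E = jump_rel G0"
  have rate0: "rate_matrix G0" using rate pi_S by (simp add: G0_def)
  have pipos: "0 < \<pi>$x" for x
    by (rule pi_pos[OF rate0 _ pi_S]) (use stat irr in \<open>simp_all add: G0_def\<close>)
  have pisum: "(\<Sum>x\<in>UNIV. \<pi>$x) = 1" using pi_S by (simp add: prob_simplex_def)
  have stat0: "\<pi> v* G0 = 0" using stat by (simp add: G0_def)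
  define m where "m = Min (range (\<lambda>x. \<pi>$x))"
  have m0: "0 < m" unfolding m_def by (subst Min_gr_iff) (auto simp: pipos)
  have mle: "\<forall>x. m \<le> \<pi>$x" unfolding m_def by (auto intro: Min_le)
  define \<delta> where "\<delta> = Min (insert 2 ((\<lambda>(x,y). G0$x$y) ` E)) / 2"
  have finE: "finite E" by simp
  have \<delta>0: "0 < \<delta>"
  proof -
    have "0 < Min (insert 2 ((\<lambda>(x,y). G0$x$y) ` E))"
      using finE by (subst Min_gr_iff) (auto simp: E_def jump_rel_def)
    thus ?thesis by (simp add: \<delta>_def)
  qed
  have \<delta>E: "2 * \<delta> \<le> G0$x$y" if "(x,y) \<in> E" for x y
  proof -
    have "Min (insert 2 ((\<lambda>(x,y). G0$x$y) ` E)) \<le> G0$x$y"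
      using finE that by (intro Min_le) force+
    thus ?thesis by (simp add: \<delta>_def)
  qed
  have Eoff: "x \<noteq> y" if "(x,y) \<in> E" for x y using that by (simp add: E_def jump_rel_def)
  have Estar: "\<forall>x y. (x,y) \<in> E\<^sup>*" using irr by (simp add: E_def G0_def irreducible_rate_def)
  define kf where "kf = (\<lambda>(x,y). SOME k. (x,y) \<in> E^^k)"
  define N where "N = Max (range kf)"
  have conn: "\<forall>x y. \<exists>k\<le>N. (x,y) \<in> E^^k"
  proof (intro allI)
    fix x y
    have "\<exists>k. (x,y) \<in> E^^k" using Estar rtrancl_power by blast
    hence "(x,y) \<in> E^^(kf (x,y))" unfolding kf_def by (simp add: someI_ex[of "\<lambda>k. (x,y) \<in> E^^k"])
    moreover have "kf (x,y) \<le> N" unfolding N_def by (rule Max_ge) auto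
    ultimately show "\<exists>k\<le>N. (x,y) \<in> E^^k" by blast
  qed
  define d where "d = real CARD('n)"
  have d0: "0 < d" by (simp add: d_def)
  define X where "X = 4*(d*((real N)^2+1)*(L+1))"
  have X0: "0 < X" unfolding X_def using d0 L0
    by (intro mult_pos_pos) (auto intro: add_nonneg_pos add_pos_nonneg)
  define lam0 where "lam0 = min 1 (min (\<delta>/(2*(L+1))) (m^2*\<delta>/X))"
  have lam00: "0 < lam0" using \<delta>0 L0 m0 X0 by (simp add: lam0_def)
  show ?thesis
  proof (rule exI[of _ lam0], intro conjI allI impI)
    show "0 < lam0" by (rule lam00)
    show "lam0 \<le> 1" by (simp add: lam0_def)
    fix lam :: real and p :: "real \<Rightarrow> real^'n" and t :: real
    assume lam: "0 \<le> lam \<and> lam \<le> lam0"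
      and pS: "\<forall>t\<ge>0. p t \<in> prob_simplex"
      and pd: "\<forall>t\<ge>0. (p has_vector_derivative (p t v* \<Gamma> (lam *\<^sub>R (p t - \<pi>) + \<pi>))) (at t within {0..})"
      and t: "0 \<le> t"
    have lam1: "lam \<le> 1" and lam2: "lam \<le> \<delta>/(2*(L+1))" and lam3: "lam \<le> m^2*\<delta>/X"
      using lam by (auto simp: lam0_def)
    define q where "q = lam *\<^sub>R (p t - \<pi>) + \<pi>"
    have ptS: "p t \<in> prob_simplex" using pS t by simp
    have qS: "q \<in> prob_simplex" unfolding q_def using ptS pi_S lam lam1 by (intro simplex_comb) auto
    define Q where "Q = \<Gamma> q"
    have rateQ: "rate_matrix Q" using rate qS by (simp add: Q_def)
    have offd: "\<forall>x y. x \<noteq> y \<longrightarrow> 0 \<le> Q$x$y" and rows: "\<forall>x. (\<Sum>y\<in>UNIV. Q$x$y) = 0"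
      using rateQ by (auto simp: rate_matrix_def)
    have nd: "norm (p t - \<pi>) \<le> 2"
      using norm_triangle_ineq4[of "p t" \<pi>] simplex_norm[OF ptS] simplex_norm[OF pi_S] by linarith
    have dQ: "norm (Q - G0) \<le> L * lam * norm (p t - \<pi>)"
    proof -
      have "norm (Q - G0) = dist (\<Gamma> q) (\<Gamma> \<pi>)" by (simp add: Q_def G0_def dist_norm)
      also have "\<dots> \<le> L * dist q \<pi>" by (rule Ldist[OF qS pi_S])
      also have "dist q \<pi> = lam * norm (p t - \<pi>)" using lam by (simp add: q_def dist_norm)
      finally show ?thesis by (simp add: mult.assoc)
    qed
    have lamd: "L * lam * 2 \<le> \<delta>"
    proof -
      have "L * lam * 2 \<le> (L+1) * lam * 2" using lam by (intro mult_right_mono) auto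
      also have "\<dots> \<le> (L+1) * (\<delta>/(2*(L+1))) * 2" using lam2 L0 by (intro mult_right_mono mult_left_mono) auto
      also have "\<dots> = \<delta>" using L0 by (simp add: field_simps)
      finally show ?thesis .
    qed
    have Eq: "\<forall>(x,y)\<in>E. x \<noteq> y \<and> \<delta> \<le> Q$x$y"
    proof (intro ballI, clarify)
      fix x y assume xy: "(x,y) \<in> E"
      have "\<bar>(Q - G0)$x$y\<bar> \<le> L * lam * norm (p t - \<pi>)" using entry_le_norm[of "Q - G0" x y] dQ by linarith
      also have "\<dots> \<le> L * lam * 2" using nd L0 lam by (intro mult_left_mono) auto
      finally have "\<bar>Q$x$y - G0$x$y\<bar> \<le> \<delta>" using lamd by simp
      thus "x \<noteq> y \<and> \<delta> \<le> Q$x$y" using \<delta>E[OF xy] Eoff[OF xy] by linarith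
    qed
    have Kb: "\<forall>y. \<bar>(\<pi> v* Q)$y\<bar> \<le> (L * lam) * norm (p t - \<pi>)"
    proof
      fix y
      have "(\<pi> v* Q)$y = (\<Sum>x\<in>UNIV. \<pi>$x * (Q - G0)$x$y) + (\<pi> v* G0)$y"
        by (simp add: vector_matrix_mult_def algebra_simps sum_subtractf)
      hence e: "(\<pi> v* Q)$y = (\<Sum>x\<in>UNIV. \<pi>$x * (Q - G0)$x$y)" using stat0 by simp
      have "\<bar>\<Sum>x\<in>UNIV. \<pi>$x * (Q - G0)$x$y\<bar> \<le> (\<Sum>x\<in>UNIV. \<bar>\<pi>$x * (Q - G0)$x$y\<bar>)" by (rule sum_abs)
      also have "\<dots> \<le> (\<Sum>x\<in>UNIV. \<pi>$x * norm (Q - G0))"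
      proof (rule sum_mono)
        fix x
        have "\<bar>(Q - G0)$x$y\<bar> \<le> norm (Q - G0)" by (rule entry_le_norm)
        thus "\<bar>\<pi>$x * (Q - G0)$x$y\<bar> \<le> \<pi>$x * norm (Q - G0)"
          using pipos[of x] by (simp add: abs_mult mult_left_mono)
      qed
      also have "\<dots> = norm (Q - G0)" using pisum by (simp add: sum_distrib_right[symmetric])
      finally show "\<bar>(\<pi> v* Q)$y\<bar> \<le> (L * lam) * norm (p t - \<pi>)" using e dQ by simp
    qed
    have small: "real CARD('n) * (L * lam) * (real N)^2 \<le> m^2*\<delta>/4"
    proof -
      have "real CARD('n) * (L * lam) * (real N)^2 \<le> d * ((L+1) * lam) * ((real N)^2 + 1)"
        unfolding d_def using L0 lam by (intro mult_mono) auto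
      also have "\<dots> = lam * X / 4" by (simp add: X_def algebra_simps)
      also have "\<dots> \<le> (m^2*\<delta>/X) * X / 4" using lam3 X0 by (intro divide_right_mono mult_right_mono) auto
      also have "\<dots> = m^2*\<delta>/4" using X0 by simp
      finally show ?thesis .
    qed
    have pder: "((\<lambda>s. p s $ y) has_real_derivative (p t v* Q)$y) (at t within {0..})" for y
    proof -
      have "(p has_vector_derivative (p t v* Q)) (at t within {0..})" using pd t by (simp add: Q_def q_def)
      from bounded_linear.has_vector_derivative[OF bounded_linear_vec_nth this, of y]
      show ?thesis by (simp add: has_real_derivative_iff_has_vector_derivative)
    qed
    have nn: "\<forall>s\<in>{0..}. 0 \<le> p s $ y" for y using pS by (auto simp: prob_simplex_def)
    define dq where "dq y s = (p s$y * ln (p s$y/\<pi>$y) - p t$y * ln (p t$y/\<pi>$y)) / (s - t)" for y s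
    have quot: "(\<lambda>s. (rel_entropy (p s) \<pi> - rel_entropy (p t) \<pi>) / (s - t)) = (\<lambda>s. \<Sum>y\<in>UNIV. dq y s)"
      by (simp add: fun_eq_iff rel_entropy_eq dq_def sum_subtractf[symmetric] sum_divide_distrib)
    show "\<exists>D::ereal. ((\<lambda>s. ereal ((rel_entropy (p s) \<pi> - rel_entropy (p t) \<pi>) / (s - t))) \<longlongrightarrow> D)
            (at t within {0..}) \<and> D \<le> 0 \<and> (D < 0 \<longleftrightarrow> p t \<noteq> \<pi>)"
    proof (cases "\<forall>y. 0 < p t $ y")
      case True
      define c where "c y = (p t v* Q)$y * (ln (p t$y/\<pi>$y) + 1)" for y
      have lim: "((\<lambda>s. \<Sum>y\<in>UNIV. dq y s) \<longlongrightarrow> (\<Sum>y\<in>UNIV. c y)) (at t within {0..})"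
        unfolding dq_def c_def using True by (intro tendsto_sum term_pos pder pipos) auto
      have psum: "(\<Sum>x\<in>UNIV. p t$x) = 1" using ptS by (simp add: prob_simplex_def)
      define G where "G = (\<Sum>y\<in>UNIV. (p t v* Q)$y * ln (p t$y/\<pi>$y))"
      define T where "T = (\<Sum>(x,y)\<in>E. (p t$y/\<pi>$y - p t$x/\<pi>$x)^2)"
      have me: "G \<le> -(m^2*\<delta>/4) * T \<and> (T = 0 \<longrightarrow> p t = \<pi>)"
        unfolding G_def T_def
        by (rule main_est[OF offd rows mle m0 pisum _ psum Eq \<delta>0 conn _ Kb small])
           (use True L0 lam in auto)
      have sumc: "(\<Sum>y\<in>UNIV. c y) = G"
        using colsum_gen[OF rows, of "p t"] by (simp add: c_def G_def algebra_simps sum.distrib)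
      have T0: "0 \<le> T" unfolding T_def by (rule sum_nonneg) auto
      have cpos: "0 < m^2*\<delta>/4" using m0 \<delta>0 by simp
      have "0 \<le> (m^2*\<delta>/4) * T" using T0 cpos by simp
      hence G0le: "G \<le> 0" using me by linarith
      have Giff: "G < 0 \<longleftrightarrow> p t \<noteq> \<pi>"
      proof
        assume "G < 0"
        moreover have "p t = \<pi> \<Longrightarrow> G = 0" unfolding G_def using pipos by (simp add: less_imp_neq[symmetric])
        ultimately show "p t \<noteq> \<pi>" by auto
      next
        assume "p t \<noteq> \<pi>"
        hence "T \<noteq> 0" using me by auto
        hence "0 < T" using T0 by simp
        hence "0 < (m^2*\<delta>/4) * T" using cpos by simp
        thus "G < 0" using me by linarith
      qed
      have "((\<lambda>s. (rel_entropy (p s) \<pi> - rel_entropy (p t) \<pi>) / (s - t)) \<longlongrightarrow> G) (at t within {0..})"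
        unfolding quot using lim sumc by simp
      hence "((\<lambda>s. ereal ((rel_entropy (p s) \<pi> - rel_entropy (p t) \<pi>) / (s - t))) \<longlongrightarrow> ereal G) (at t within {0..})"
        by (rule tendsto_ereal)
      moreover have "ereal G \<le> 0" using G0le by simp
      moreover have "ereal G < 0 \<longleftrightarrow> p t \<noteq> \<pi>" using Giff by simp
      ultimately show ?thesis by blast
    next
      case False
      then obtain z where z: "p t $ z = 0" using ptS by (auto simp: prob_simplex_def not_less intro: antisym)
      obtain a b where ab: "(a,b) \<in> E" "0 < p t $ a" "p t $ b = 0"
        using boundary_edge[OF ptS z Estar] by blast
      have flow: "0 < (p t v* Q)$b"
      proof (rule flow_pos[OF _ offd])
        show "\<forall>x. 0 \<le> p t $ x" using ptS by (simp add: prob_simplex_def)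
        show "a \<noteq> b" by (rule Eoff[OF ab(1)])
        show "0 < Q$a$b" using Eq ab(1) \<delta>0 by fastforce
      qed (use ab in auto)
      note tb = term_bot[OF pder[of b] ab(3) flow pipos[of b] nn[of b]]
      let ?F = "at t within ({0..}::real set)"
      have tbot: "filterlim (dq b) at_bot ?F" using tb(1) unfolding dq_def .
      have evt: "eventually (\<lambda>s. t < s) ?F" using tb(2) by eventually_elim simp
      define c where "c y = (p t v* Q)$y * (ln (p t$y/\<pi>$y) + 1)" for y
      define h where "h s = (\<Sum>y\<in>UNIV-{b}. if 0 < p t$y then dq y s else 0)" for s
      have hlim: "(h \<longlongrightarrow> (\<Sum>y\<in>UNIV-{b}. if 0 < p t$y then c y else 0)) ?F"
        unfolding h_def
      proof (intro tendsto_sum)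
        fix y
        show "((\<lambda>s. if 0 < p t$y then dq y s else 0) \<longlongrightarrow> (if 0 < p t$y then c y else 0)) ?F"
        proof (cases "0 < p t$y")
          case True thus ?thesis unfolding dq_def c_def using term_pos[OF pder[of y] True pipos[of y]] by simp
        qed simp
      qed
      have evle: "eventually (\<lambda>s. \<forall>y\<in>UNIV-{b}. dq y s \<le> (if 0 < p t$y then dq y s else 0)) ?F"
      proof (rule eventually_ball_finite, simp, intro ballI)
        fix y
        show "eventually (\<lambda>s. dq y s \<le> (if 0 < p t$y then dq y s else 0)) ?F"
        proof (cases "0 < p t$y")
          case False
          hence y0: "p t $ y = 0" using nn[of y] t by (auto simp: not_less intro: antisym)
          have cont: "((\<lambda>s. p s $ y) \<longlongrightarrow> 0) ?F"
            using DERIV_continuous[OF pder[of y]] y0 by (simp add: continuous_within)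
          have "eventually (\<lambda>s. dq y s \<le> 0) ?F"
            unfolding dq_def by (rule term_zero[OF cont y0 pipos[of y] nn[of y] evt])
          thus ?thesis using False by simp
        qed simp
      qed
      have evtot: "eventually (\<lambda>s. (\<Sum>y\<in>UNIV. dq y s) \<le> dq b s + h s) ?F"
        using evle
      proof eventually_elim
        case (elim s)
        have "(\<Sum>y\<in>UNIV. dq y s) = dq b s + (\<Sum>y\<in>UNIV-{b}. dq y s)"
          by (simp add: sum.remove)
        also have "\<dots> \<le> dq b s + h s" unfolding h_def using elim by (intro add_left_mono sum_mono) auto
        finally show ?case .
      qed
      have "filterlim (\<lambda>s. h s + dq b s) at_bot ?F"
        using filterlim_tendsto_add_at_bot_iff[OF hlim] tbot by simp
      hence "filterlim (\<lambda>s. dq b s + h s) at_bot ?F" by (simp add: add.commute)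
      hence tot: "filterlim (\<lambda>s. \<Sum>y\<in>UNIV. dq y s) at_bot ?F" by (rule my_at_bot_mono[OF _ evtot])
      have "((\<lambda>s. ereal (\<Sum>y\<in>UNIV. dq y s)) \<longlongrightarrow> -\<infinity>) ?F"
        using tot ereal_tendsto_simps2(3)[of "\<lambda>s. \<Sum>y\<in>UNIV. dq y s"] by (simp add: o_def)
      moreover have "p t \<noteq> \<pi>" using ab(3) pipos[of b] by auto
      moreover have "\<And>s. (rel_entropy (p s) \<pi> - rel_entropy (p t) \<pi>) / (s - t) = (\<Sum>y\<in>UNIV. dq y s)"
        using quot by (simp add: fun_eq_iff)
      ultimately show ?thesis by (intro exI[of _ "-\<infinity>"]) simp
    qed
  qed
qed
end
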